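(* Let $A$ be a monounary algebra. Then there is $B\in\mathbf R(A)\cap\mathcal U^\bigstar_\bigstar$ such that $\mathbf V(A)=\mathbf V(B)$.
   Context: A monounary algebra is a pair $(A,f)$ with $A$ a nonempty set and $f:A\to A$; direct products are coordinatewise. A monounary algebra is connected if for all $x,y$ there are $m,n\ge0$ with $f^m(x)=f^n(y)$; connected components are the maximal connected subalgebras. A retract of $A$ is a nonempty subalgebra $M$ such that there is an endomorphism $h:A\to M$ with $h|_M=\mathrm{id}$. $\mathbf R(A)$ is the class of algebras isomorphic to a retract of $A$. A retract variety is a class closed under isomorphisms, retracts and direct products; $\mathbf V(\mathcal K)$ is the smallest retract variety containing $\mathcal K$. Condition ($\bigstar\bigstar$) on $A$: among any three pairwise isomorphic connected components $C_1,C_2,C_3$ of $A$ at most two are distinct, i.e. $|\{C_1,C_2,C_3\}|\le2$; $\mathcal U^\bigstar_\bigstar$ is the class of monounary algebras satisfying it. *)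

theory Defs
  imports "HOL-Library.FuncSet"
begin

definition monounary :: "'a set \<Rightarrow> ('a \<Rightarrow> 'a) \<Rightarrow> bool" where
  "monounary A f \<longleftrightarrow> A \<noteq> {} \<and> (\<forall>x\<in>A. f x \<in> A)"

definition subalg :: "'a set \<Rightarrow> ('a \<Rightarrow> 'a) \<Rightarrow> 'a set \<Rightarrow> bool" where
  "subalg A f M \<longleftrightarrow> M \<noteq> {} \<and> M \<subseteq> A \<and> (\<forall>x\<in>M. f x \<in> M)"

definition mhom :: "'a set \<Rightarrow> ('a \<Rightarrow> 'a) \<Rightarrow> 'b set \<Rightarrow> ('b \<Rightarrow> 'b) \<Rightarrow> ('a \<Rightarrow> 'b) \<Rightarrow> bool" where
  "mhom A f B g h \<longleftrightarrow> (\<forall>x\<in>A. h x \<in> B) \<and> (\<forall>x\<in>A. h (f x) = g (h x))"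

definition miso :: "'a set \<Rightarrow> ('a \<Rightarrow> 'a) \<Rightarrow> 'b set \<Rightarrow> ('b \<Rightarrow> 'b) \<Rightarrow> bool" where
  "miso A f B g \<longleftrightarrow> (\<exists>h. mhom A f B g h \<and> bij_betw h A B)"

definition retract :: "'a set \<Rightarrow> ('a \<Rightarrow> 'a) \<Rightarrow> 'a set \<Rightarrow> bool" where
  "retract A f M \<longleftrightarrow> subalg A f M \<and> (\<exists>h. mhom A f M f h \<and> (\<forall>x\<in>M. h x = x))"

definition in_R :: "'a set \<Rightarrow> ('a \<Rightarrow> 'a) \<Rightarrow> 'b set \<Rightarrow> ('b \<Rightarrow> 'b) \<Rightarrow> bool" where
  "in_R A f B g \<longleftrightarrow> (\<exists>M. retract A f M \<and> miso B g M f)"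

definition connected_alg :: "'a set \<Rightarrow> ('a \<Rightarrow> 'a) \<Rightarrow> bool" where
  "connected_alg C f \<longleftrightarrow> (\<forall>x\<in>C. \<forall>y\<in>C. \<exists>m n. (f ^^ m) x = (f ^^ n) y)"

definition component :: "'a set \<Rightarrow> ('a \<Rightarrow> 'a) \<Rightarrow> 'a set \<Rightarrow> bool" where
  "component A f C \<longleftrightarrow> subalg A f C \<and> connected_alg C f \<and>
     (\<forall>D. subalg A f D \<and> connected_alg D f \<and> C \<subseteq> D \<longrightarrow> D = C)"

definition starstar :: "'a set \<Rightarrow> ('a \<Rightarrow> 'a) \<Rightarrow> bool" where
  "starstar A f \<longleftrightarrow> (\<forall>C1 C2 C3. component A f C1 \<and> component A f C2 \<and> component A f C3 \<and>
      miso C1 f C2 f \<and> miso C1 f C3 f \<and> miso C2 f C3 f \<longrightarrow> card {C1, C2, C3} \<le> 2)"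

definition pow_op :: "'i set \<Rightarrow> ('a \<Rightarrow> 'a) \<Rightarrow> ('i \<Rightarrow> 'a) \<Rightarrow> ('i \<Rightarrow> 'a)" where
  "pow_op I g = (\<lambda>x. restrict (\<lambda>i. g (x i)) I)"

text \<open>(A,f) \<in> V(B,g) = I R P(B,g): isomorphic to a retract of a direct power of (B,g).
  Index sets are taken from the (large) type 'a set set.\<close>
definition in_V :: "'a set \<Rightarrow> ('a \<Rightarrow> 'a) \<Rightarrow> 'a set \<Rightarrow> ('a \<Rightarrow> 'a) \<Rightarrow> bool" where
  "in_V B g A f \<longleftrightarrow> (\<exists>I :: 'a set set. in_R (PiE I (\<lambda>_. B)) (pow_op I g) A f)"

definition same_V :: "'a set \<Rightarrow> ('a \<Rightarrow> 'a) \<Rightarrow> 'a set \<Rightarrow> ('a \<Rightarrow> 'a) \<Rightarrow> bool" where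
  "same_V A f B g \<longleftrightarrow> in_V B g A f \<and> in_V A f B g"

end

theory Submission
  imports Defs
begin

definition conn :: "('a \<Rightarrow> 'a) \<Rightarrow> 'a \<Rightarrow> 'a \<Rightarrow> bool" where
  "conn f u v \<longleftrightarrow> (\<exists>m n. (f ^^ m) u = (f ^^ n) v)"

lemma conn_refl: "conn f u u"
  unfolding conn_def by blast

lemma conn_sym: "conn f u v \<Longrightarrow> conn f v u"
  unfolding conn_def by metis

lemma conn_trans: assumes "conn f u v" "conn f v w" shows "conn f u w"
proof -
  obtain m n where 1: "(f ^^ m) u = (f ^^ n) v" using assms(1) unfolding conn_def by blast
  obtain p q where 2: "(f ^^ p) v = (f ^^ q) w" using assms(2) unfolding conn_def by blast
  have "(f ^^ (p + m)) u = (f ^^ p) ((f ^^ m) u)" by (simp add: funpow_add)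
  also have "\<dots> = (f ^^ p) ((f ^^ n) v)" using 1 by simp
  also have "\<dots> = (f ^^ n) ((f ^^ p) v)" by (metis comp_apply funpow_add add.commute)
  also have "\<dots> = (f ^^ (n + q)) w" using 2 by (simp add: funpow_add)
  finally show ?thesis unfolding conn_def by blast
qed

lemma conn_step: "conn f u (f u)"
  unfolding conn_def by (rule exI[of _ 1], rule exI[of _ 0]) simp

lemma conn_f_left: "conn f (f u) v \<longleftrightarrow> conn f u v"
  by (meson conn_step conn_sym conn_trans)

lemma miso_refl: "miso D f D f"
  unfolding miso_def mhom_def by (rule exI[of _ id]) auto

lemma mhom_inv:
  assumes "mhom D f E g h" "bij_betw h D E" "\<And>x. x \<in> D \<Longrightarrow> f x \<in> D"
  shows "mhom E g D f (inv_into D h)"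
  unfolding mhom_def
proof (intro conjI ballI)
  fix y assume y: "y \<in> E"
  then obtain x where x: "x \<in> D" "y = h x" using assms(2) by (auto simp: bij_betw_def)
  show "inv_into D h y \<in> D" using x by (simp add: inv_into_into)
  have inj: "inj_on h D" using assms(2) by (simp add: bij_betw_def)
  have "inv_into D h (g y) = inv_into D h (h (f x))" using x assms(1) by (simp add: mhom_def)
  also have "\<dots> = f x" using inj assms(3) x by (simp add: inv_into_f_f)
  also have "\<dots> = f (inv_into D h y)" using inj x by (simp add: inv_into_f_f)
  finally show "inv_into D h (g y) = f (inv_into D h y)" .
qed

lemma miso_sym:
  assumes "miso D f E g" "\<And>x. x \<in> D \<Longrightarrow> f x \<in> D"
  shows "miso E g D f"
proof -
  obtain h where "mhom D f E g h" "bij_betw h D E" using assms(1) unfolding miso_def by blast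
  then show ?thesis unfolding miso_def using mhom_inv assms(2) bij_betw_inv_into by blast
qed

lemma miso_trans:
  assumes "miso D f E g" "miso E g F k"
  shows "miso D f F k"
proof -
  obtain h where h: "mhom D f E g h" "bij_betw h D E" using assms(1) unfolding miso_def by blast
  obtain h2 where h2: "mhom E g F k h2" "bij_betw h2 E F" using assms(2) unfolding miso_def by blast
  have "mhom D f F k (h2 \<circ> h)" using h h2 unfolding mhom_def by auto
  moreover have "bij_betw (h2 \<circ> h) D F" using h(2) h2(2) by (rule bij_betw_trans)
  ultimately show ?thesis unfolding miso_def by blast
qed

lemma in_V_intro:
  fixes X Y :: "'a set" and I :: "'a set set"
  assumes e1: "\<And>x. x \<in> X \<Longrightarrow> e x \<in> PiE I (\<lambda>_. Y)"
    and e2: "\<And>x. x \<in> X \<Longrightarrow> e (f x) = pow_op I g (e x)"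
    and p1: "\<And>x. x \<in> PiE I (\<lambda>_. Y) \<Longrightarrow> p x \<in> X"
    and p2: "\<And>x. x \<in> PiE I (\<lambda>_. Y) \<Longrightarrow> p (pow_op I g x) = f (p x)"
    and pe: "\<And>x. x \<in> X \<Longrightarrow> p (e x) = x"
    and ne: "X \<noteq> {}" and cl: "\<And>x. x \<in> X \<Longrightarrow> f x \<in> X"
  shows "in_V Y g X f"
  unfolding in_V_def in_R_def
proof (intro exI conjI)
  let ?M = "e ` X"
  show "retract (PiE I (\<lambda>_. Y)) (pow_op I g) ?M"
    unfolding retract_def subalg_def
  proof (intro conjI)
    show "?M \<noteq> {}" using ne by simp
    show "?M \<subseteq> PiE I (\<lambda>_. Y)" using e1 by auto
    show "\<forall>x\<in>?M. pow_op I g x \<in> ?M" using e2 cl by (auto simp del: pow_op_def) (metis image_eqI)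
    show "\<exists>h. mhom (PiE I (\<lambda>_. Y)) (pow_op I g) ?M (pow_op I g) h \<and> (\<forall>x\<in>?M. h x = x)"
      apply (rule exI[of _ "e \<circ> p"])
      unfolding mhom_def using p1 p2 pe e2 by auto
  qed
  show "miso X f ?M (pow_op I g)"
    unfolding miso_def mhom_def
    apply (rule exI[of _ e])
    using e2 cl inj_on_inverseI[of X p e] pe by (auto simp: bij_betw_def)
qed


locale mu =
  fixes A :: "'a set" and f :: "'a \<Rightarrow> 'a"
  assumes ne: "A \<noteq> {}" and cl: "\<And>x. x \<in> A \<Longrightarrow> f x \<in> A"
begin

definition cls :: "'a \<Rightarrow> 'a set" where "cls a = {v \<in> A. conn f a v}"
definition isclass :: "'a set \<Rightarrow> bool" where "isclass D \<longleftrightarrow> (\<exists>a\<in>A. D = cls a)"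

lemma cls_mem: "a \<in> A \<Longrightarrow> a \<in> cls a"
  unfolding cls_def by (simp add: conn_refl)

lemma cls_eq: "v \<in> cls a \<Longrightarrow> cls v = cls a"
  unfolding cls_def by (auto intro: conn_trans conn_sym)

lemma cls_f: "a \<in> A \<Longrightarrow> cls (f a) = cls a"
  unfolding cls_def using conn_f_left[of f a] by simp

lemma class_sub: "isclass D \<Longrightarrow> D \<subseteq> A"
  unfolding isclass_def cls_def by blast

lemma class_cl: "isclass D \<Longrightarrow> v \<in> D \<Longrightarrow> f v \<in> D"
proof -
  assume d: "isclass D" and v: "v \<in> D"
  obtain a where a: "D = cls a" using d unfolding isclass_def by blast
  have va: "v \<in> A" "conn f a v" using v a unfolding cls_def by auto
  have "conn f a (f v)" by (rule conn_trans[OF va(2) conn_step])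
  then show ?thesis using a cl[OF va(1)] unfolding cls_def by simp
qed

lemma class_eq: "isclass D \<Longrightarrow> a \<in> D \<Longrightarrow> D = cls a"
  unfolding isclass_def using cls_eq[of a] by auto

lemma class_cls: "a \<in> A \<Longrightarrow> isclass (cls a)"
  unfolding isclass_def by blast

lemma class_ne: "isclass D \<Longrightarrow> D \<noteq> {}"
  unfolding isclass_def using cls_mem by blast

lemma class_iso_sym: "isclass D \<Longrightarrow> miso D f E f \<Longrightarrow> miso E f D f"
  using miso_sym class_cl by blast

definition rep1 :: "'a set \<Rightarrow> 'a set" where
  "rep1 D = (SOME E. isclass E \<and> miso E f D f)"
definition rep2 :: "'a set \<Rightarrow> 'a set" where
  "rep2 D = (if \<exists>E. isclass E \<and> miso E f D f \<and> E \<noteq> rep1 D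
     then SOME E. isclass E \<and> miso E f D f \<and> E \<noteq> rep1 D else rep1 D)"
definition kept :: "'a set \<Rightarrow> bool" where
  "kept D \<longleftrightarrow> D = rep1 D \<or> D = rep2 D"

lemma rep1: "isclass D \<Longrightarrow> isclass (rep1 D) \<and> miso (rep1 D) f D f"
proof -
  assume d: "isclass D"
  have "isclass D \<and> miso D f D f" using d miso_refl by blast
  then show ?thesis unfolding rep1_def by (rule someI)
qed

lemma rep2: "isclass D \<Longrightarrow> isclass (rep2 D) \<and> miso (rep2 D) f D f"
proof -
  assume d: "isclass D"
  show ?thesis
  proof (cases "\<exists>E. isclass E \<and> miso E f D f \<and> E \<noteq> rep1 D")
    case True
    then have "rep2 D = (SOME E. isclass E \<and> miso E f D f \<and> E \<noteq> rep1 D)" unfolding rep2_def by (rule if_P)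
    then show ?thesis using someI_ex[OF True] by simp
  next
    case False
    then have "rep2 D = rep1 D" unfolding rep2_def by (rule if_not_P)
    then show ?thesis using rep1[OF d] by simp
  qed
qed

lemma same_pred:
  assumes "isclass D" "isclass E" "miso D f E f"
  shows "(\<lambda>X. isclass X \<and> miso X f D f) = (\<lambda>X. isclass X \<and> miso X f E f)"
proof -
  have "miso E f D f" using assms class_iso_sym by blast
  then show ?thesis using assms(3) miso_trans[of _ f D f E f] miso_trans[of _ f E f D f] by (intro ext iffI) auto
qed

lemma rep_eq:
  assumes "isclass D" "isclass E" "miso D f E f"
  shows "rep1 D = rep1 E" "rep2 D = rep2 E"
proof -
  have s: "\<And>X. (isclass X \<and> miso X f D f) = (isclass X \<and> miso X f E f)"
    using same_pred[OF assms] by metis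
  show r1: "rep1 D = rep1 E" unfolding rep1_def using s by simp
  have s2: "(\<lambda>X. isclass X \<and> miso X f D f \<and> X \<noteq> rep1 E) = (\<lambda>X. isclass X \<and> miso X f E f \<and> X \<noteq> rep1 E)"
    using s r1 by auto
  have s3: "(\<exists>X. isclass X \<and> miso X f D f \<and> X \<noteq> rep1 E) = (\<exists>X. isclass X \<and> miso X f E f \<and> X \<noteq> rep1 E)"
    using s2 by metis
  show "rep2 D = rep2 E" unfolding rep2_def r1 s3 s2 by (rule refl)
qed

lemma rep2_same:
  assumes "isclass D" "rep2 D = rep1 D" "isclass E" "miso E f D f"
  shows "E = rep1 D"
proof (rule ccontr)
  assume "E \<noteq> rep1 D"
  then have ex: "\<exists>E. isclass E \<and> miso E f D f \<and> E \<noteq> rep1 D" using assms by blast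
  then have "rep2 D = (SOME E. isclass E \<and> miso E f D f \<and> E \<noteq> rep1 D)" unfolding rep2_def by simp
  moreover have "(SOME E. isclass E \<and> miso E f D f \<and> E \<noteq> rep1 D) \<noteq> rep1 D"
    using someI_ex[OF ex] by blast
  ultimately show False using assms(2) by simp
qed

lemma kept_rep1: "isclass D \<Longrightarrow> kept (rep1 D)"
proof -
  assume c: "isclass D"
  have "rep1 (rep1 D) = rep1 D" using rep1[OF c] rep_eq(1)[of "rep1 D" D] c by blast
  then show ?thesis unfolding kept_def by simp
qed

lemma kept_rep2: "isclass D \<Longrightarrow> kept (rep2 D)"
proof -
  assume c: "isclass D"
  have "rep2 (rep2 D) = rep2 D" using rep2[OF c] rep_eq(2)[of "rep2 D" D] c by blast
  then show ?thesis unfolding kept_def by simp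
qed

definition Bs :: "'a set" where "Bs = \<Union>{D. isclass D \<and> kept D}"

lemma Bs_iff: "a \<in> A \<Longrightarrow> a \<in> Bs \<longleftrightarrow> kept (cls a)"
  unfolding Bs_def using class_eq cls_mem class_cls by blast

lemma Bs_sub: "Bs \<subseteq> A"
  unfolding Bs_def using class_sub by blast

lemma Bs_cl: "x \<in> Bs \<Longrightarrow> f x \<in> Bs"
  unfolding Bs_def using class_cl by blast

lemma Bs_ne: "Bs \<noteq> {}"
proof -
  obtain a where a: "a \<in> A" using ne by blast
  then have "isclass (rep1 (cls a))" "kept (rep1 (cls a))" using rep1 kept_rep1 class_cls by auto
  then show ?thesis unfolding Bs_def using class_ne by blast
qed

lemma kept_sub: "isclass D \<Longrightarrow> kept D \<Longrightarrow> D \<subseteq> Bs"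
  unfolding Bs_def by blast

definition isoh :: "'a set \<Rightarrow> 'a set \<Rightarrow> 'a \<Rightarrow> 'a" where
  "isoh D E = (SOME h. mhom D f E f h \<and> bij_betw h D E)"

lemma isoh: "miso D f E f \<Longrightarrow> mhom D f E f (isoh D E) \<and> bij_betw (isoh D E) D E"
  using someI_ex[of "\<lambda>h. mhom D f E f h \<and> bij_betw h D E"] unfolding isoh_def miso_def by blast

lemma isoh_f: "miso D f E f \<Longrightarrow> x \<in> D \<Longrightarrow> isoh D E (f x) = f (isoh D E x)"
  using isoh unfolding mhom_def by blast

lemma isoh_in: "miso D f E f \<Longrightarrow> x \<in> D \<Longrightarrow> isoh D E x \<in> E"
  using isoh unfolding mhom_def by blast

definition r :: "'a \<Rightarrow> 'a" where
  "r a = (if a \<in> Bs then a else isoh (cls a) (rep1 (cls a)) a)"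

lemma r_in: "a \<in> A \<Longrightarrow> r a \<in> Bs"
proof -
  assume a: "a \<in> A"
  have c: "isclass (cls a)" using a class_cls by blast
  have m: "miso (cls a) f (rep1 (cls a)) f" using class_iso_sym conjunct1[OF rep1[OF c]] conjunct2[OF rep1[OF c]] by blast
  show ?thesis unfolding r_def
    using isoh_in[OF m cls_mem[OF a]] kept_sub[OF conjunct1[OF rep1[OF c]] kept_rep1[OF c]] by auto
qed

lemma r_f: "a \<in> A \<Longrightarrow> r (f a) = f (r a)"
proof -
  assume a: "a \<in> A"
  have c: "isclass (cls a)" using a class_cls by blast
  have m: "miso (cls a) f (rep1 (cls a)) f" using class_iso_sym conjunct1[OF rep1[OF c]] conjunct2[OF rep1[OF c]] by blast
  have "f a \<in> Bs \<longleftrightarrow> a \<in> Bs" using Bs_iff a cl cls_f by metis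
  then show ?thesis unfolding r_def using cls_f[OF a] isoh_f[OF m cls_mem[OF a]] by simp
qed

lemma retract_Bs: "retract A f Bs"
  unfolding retract_def subalg_def mhom_def
proof (intro conjI exI[of _ r] ballI)
  show "\<And>x. x \<in> Bs \<Longrightarrow> r x = x" unfolding r_def by simp
qed (use Bs_ne Bs_sub Bs_cl r_in r_f in auto)

end

context mu
begin

lemma comp_cls:
  assumes "component Bs f C"
  shows "isclass C \<and> kept C"
proof -
  have C: "C \<noteq> {}" "C \<subseteq> Bs" "connected_alg C f"
    using assms unfolding component_def subalg_def by auto
  have mx: "\<And>D. subalg Bs f D \<Longrightarrow> connected_alg D f \<Longrightarrow> C \<subseteq> D \<Longrightarrow> D = C"
    using assms unfolding component_def by blast
  obtain a where aC: "a \<in> C" using C(1) by blast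
  have aA: "a \<in> A" using aC C(2) Bs_sub by blast
  have kc: "kept (cls a)" using Bs_iff[OF aA] aC C(2) by blast
  have cc: "isclass (cls a)" using class_cls[OF aA] .
  have sub: "cls a \<subseteq> Bs" using kept_sub[OF cc kc] .
  have sa: "subalg Bs f (cls a)"
    unfolding subalg_def using sub cls_mem[OF aA] class_cl[OF cc] by blast
  have ca: "connected_alg (cls a) f"
    unfolding connected_alg_def
  proof (intro ballI)
    fix u v assume "u \<in> cls a" "v \<in> cls a"
    then have "conn f a u" "conn f a v" unfolding cls_def by auto
    then have "conn f u v" by (metis conn_sym conn_trans)
    then show "\<exists>m n. (f ^^ m) u = (f ^^ n) v" unfolding conn_def .
  qed
  have "C \<subseteq> cls a"
  proof
    fix c assume c: "c \<in> C"
    then have "\<exists>m n. (f ^^ m) a = (f ^^ n) c" using C(3) aC unfolding connected_alg_def by blast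
    then have "conn f a c" unfolding conn_def .
    moreover have "c \<in> A" using c C(2) Bs_sub by blast
    ultimately show "c \<in> cls a" unfolding cls_def by blast
  qed
  then have "cls a = C" using mx[OF sa ca] by blast
  then show ?thesis using cc kc by simp
qed

lemma starstar_Bs: "starstar Bs f"
  unfolding starstar_def
proof (intro allI impI, elim conjE)
  fix C1 C2 C3
  assume c: "component Bs f C1" "component Bs f C2" "component Bs f C3"
    and m: "miso C1 f C2 f" "miso C1 f C3 f" "miso C2 f C3 f"
  have k1: "isclass C1" "kept C1" using comp_cls[OF c(1)] by auto
  have k2: "isclass C2" "kept C2" using comp_cls[OF c(2)] by auto
  have k3: "isclass C3" "kept C3" using comp_cls[OF c(3)] by auto
  have e2: "rep1 C2 = rep1 C1" "rep2 C2 = rep2 C1" using rep_eq[OF k1(1) k2(1) m(1)] by auto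
  have e3: "rep1 C3 = rep1 C1" "rep2 C3 = rep2 C1" using rep_eq[OF k1(1) k3(1) m(2)] by auto
  have "{C1, C2, C3} \<subseteq> {rep1 C1, rep2 C1}"
    using k1(2) k2(2) k3(2) e2 e3 unfolding kept_def by auto
  then have "card {C1, C2, C3} \<le> card {rep1 C1, rep2 C1}" by (rule card_mono[rotated]) simp
  also have "\<dots> \<le> 2" by (simp add: card_insert_if)
  finally show "card {C1, C2, C3} \<le> 2" .
qed

lemma B_in_VA: "in_V A f Bs f"
proof (rule in_V_intro[where I = "{{}}" and e = "\<lambda>b. restrict (\<lambda>i. b) {{}}" and p = "\<lambda>x. r (x {})"])
  show "\<And>x. x \<in> Bs \<Longrightarrow> restrict (\<lambda>i. x) {{}} \<in> PiE {{}} (\<lambda>_. A)" using Bs_sub by auto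
  show "\<And>x. x \<in> Bs \<Longrightarrow> restrict (\<lambda>i. f x) {{}} = pow_op {{}} f (restrict (\<lambda>i. x) {{}})"
    unfolding pow_op_def by (auto simp: restrict_def)
  show "\<And>x. x \<in> PiE {{}} (\<lambda>_. A) \<Longrightarrow> r (x {}) \<in> Bs" using r_in by auto
  show "\<And>x. x \<in> PiE {{}} (\<lambda>_. A) \<Longrightarrow> r (pow_op {{}} f x {}) = f (r (x {}))"
    unfolding pow_op_def using r_f by auto
  show "\<And>x. x \<in> Bs \<Longrightarrow> r (restrict (\<lambda>i. x) {{}} {}) = x" unfolding r_def by simp
  show "Bs \<noteq> {}" by (rule Bs_ne)
  show "\<And>x. x \<in> Bs \<Longrightarrow> f x \<in> Bs" by (rule Bs_cl)
qed

definition I0 :: "'a set set" where "I0 = {D. isclass D}"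
definition T :: "'a set \<Rightarrow> 'a set \<Rightarrow> 'a set" where
  "T D i = (if i = D then rep1 D else rep2 D)"
definition sg :: "'a set \<Rightarrow> 'a set \<Rightarrow> 'a \<Rightarrow> 'a" where
  "sg D i = isoh D (T D i)"
definition emb :: "'a \<Rightarrow> 'a set \<Rightarrow> 'a" where
  "emb a = restrict (\<lambda>i. sg (cls a) i a) I0"
definition P :: "'a set \<Rightarrow> 'a set \<Rightarrow> 'a set" where
  "P D = restrict (T D) I0"
definition pat :: "('a set \<Rightarrow> 'a) \<Rightarrow> 'a set \<Rightarrow> 'a set" where
  "pat x = restrict (\<lambda>i. cls (x i)) I0"
definition i0 :: "'a set" where "i0 = cls (SOME a. a \<in> A)"
definition dsel :: "('a set \<Rightarrow> 'a) \<Rightarrow> 'a set" where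
  "dsel x = (SOME D. isclass D \<and> pat x = P D)"
definition prj :: "('a set \<Rightarrow> 'a) \<Rightarrow> 'a" where
  "prj x = (if \<exists>D. isclass D \<and> pat x = P D then inv_into (dsel x) (sg (dsel x) i0) (x i0) else x i0)"

lemma T_class: "isclass D \<Longrightarrow> isclass (T D i) \<and> miso (T D i) f D f \<and> kept (T D i)"
  unfolding T_def using rep1 rep2 kept_rep1 kept_rep2 by auto

lemma T_iso: "isclass D \<Longrightarrow> miso D f (T D i) f"
  using T_class class_iso_sym by blast

lemma sg: "isclass D \<Longrightarrow> mhom D f (T D i) f (sg D i) \<and> bij_betw (sg D i) D (T D i)"
  unfolding sg_def using isoh T_iso by blast

lemma sg_in: "isclass D \<Longrightarrow> x \<in> D \<Longrightarrow> sg D i x \<in> T D i"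
  using sg unfolding mhom_def by blast

lemma i0: "isclass i0" "i0 \<in> I0"
proof -
  have "(SOME a. a \<in> A) \<in> A" using ne by (simp add: some_in_eq)
  then show "isclass i0" unfolding i0_def by (rule class_cls)
  then show "i0 \<in> I0" unfolding I0_def by simp
qed

lemma P_inj:
  assumes d: "isclass D" and e: "isclass E" and pe: "P D = P E"
  shows "D = E"
proof (rule ccontr)
  assume ne: "D \<noteq> E"
  have "T D i0 = T E i0" using fun_cong[OF pe, of i0] i0 unfolding P_def by simp
  then have "miso D f E f"
    using T_iso[OF d, of i0] T_class[OF e, of i0] miso_trans by metis
  then have r: "rep1 D = rep1 E" "rep2 D = rep2 E" using rep_eq[OF d e] by auto
  have "T D D = T E D" using fun_cong[OF pe, of D] d unfolding P_def I0_def by simp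
  then have "rep1 D = rep2 D" unfolding T_def using ne r by simp
  then have "D = rep1 D" "E = rep1 D"
    using rep2_same[OF d] miso_refl \<open>miso D f E f\<close> class_iso_sym[OF d] d e by metis+
  then show False using ne by simp
qed

lemma emb1: "a \<in> A \<Longrightarrow> emb a \<in> PiE I0 (\<lambda>_. Bs)"
proof -
  assume a: "a \<in> A"
  have c: "isclass (cls a)" by (rule class_cls[OF a])
  have "\<And>i. sg (cls a) i a \<in> Bs"
    using sg_in[OF c cls_mem[OF a]] kept_sub T_class[OF c] by blast
  then show ?thesis unfolding emb_def by auto
qed

lemma emb2: "a \<in> A \<Longrightarrow> emb (f a) = pow_op I0 f (emb a)"
proof -
  assume a: "a \<in> A"
  have c: "isclass (cls a)" by (rule class_cls[OF a])
  have "\<And>i. sg (cls a) i (f a) = f (sg (cls a) i a)"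
    using sg[OF c] cls_mem[OF a] unfolding mhom_def by blast
  then show ?thesis unfolding emb_def pow_op_def cls_f[OF a] by (auto simp: restrict_def)
qed

lemma pat_pow: "x \<in> PiE I0 (\<lambda>_. Bs) \<Longrightarrow> pat (pow_op I0 f x) = pat x"
proof -
  assume x: "x \<in> PiE I0 (\<lambda>_. Bs)"
  have "\<And>i. i \<in> I0 \<Longrightarrow> cls (f (x i)) = cls (x i)"
    using x Bs_sub cls_f by (metis PiE_mem subsetD)
  then show ?thesis unfolding pat_def pow_op_def by (intro ext) (auto simp: restrict_def)
qed

lemma pat_emb: "a \<in> A \<Longrightarrow> pat (emb a) = P (cls a)"
proof -
  assume a: "a \<in> A"
  have c: "isclass (cls a)" by (rule class_cls[OF a])
  have "\<And>i. cls (sg (cls a) i a) = T (cls a) i"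
    using class_eq T_class[OF c] sg_in[OF c cls_mem[OF a]] by metis
  then show ?thesis unfolding pat_def P_def emb_def by (intro ext) (auto simp: restrict_def)
qed

lemma dsel:
  assumes "\<exists>D. isclass D \<and> pat x = P D"
  shows "isclass (dsel x) \<and> pat x = P (dsel x)"
  using someI_ex[OF assms] unfolding dsel_def .

lemma prj_case:
  assumes x: "x \<in> PiE I0 (\<lambda>_. Bs)" and ex: "\<exists>D. isclass D \<and> pat x = P D"
  shows "x i0 \<in> T (dsel x) i0"
proof -
  have d: "isclass (dsel x)" "pat x = P (dsel x)" using dsel[OF ex] by auto
  have "cls (x i0) = T (dsel x) i0" using fun_cong[OF d(2), of i0] i0 unfolding pat_def P_def by simp
  moreover have "x i0 \<in> A" using x i0 Bs_sub by auto
  ultimately show ?thesis using cls_mem by blast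
qed

lemma prj1: "x \<in> PiE I0 (\<lambda>_. Bs) \<Longrightarrow> prj x \<in> A"
proof -
  assume x: "x \<in> PiE I0 (\<lambda>_. Bs)"
  show ?thesis
  proof (cases "\<exists>D. isclass D \<and> pat x = P D")
    case True
    have d: "isclass (dsel x)" using dsel[OF True] by auto
    have b: "bij_betw (sg (dsel x) i0) (dsel x) (T (dsel x) i0)" using sg[OF d] by blast
    have "x i0 \<in> sg (dsel x) i0 ` dsel x" using prj_case[OF x True] b by (simp add: bij_betw_def)
    then have "inv_into (dsel x) (sg (dsel x) i0) (x i0) \<in> dsel x" by (rule inv_into_into)
    then show ?thesis unfolding prj_def using True class_sub[OF d] by auto
  next
    case False
    then show ?thesis unfolding prj_def using x i0 Bs_sub by auto
  qed
qed

lemma prj2: "x \<in> PiE I0 (\<lambda>_. Bs) \<Longrightarrow> prj (pow_op I0 f x) = f (prj x)"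
proof -
  assume x: "x \<in> PiE I0 (\<lambda>_. Bs)"
  have pp: "pat (pow_op I0 f x) = pat x" using pat_pow[OF x] .
  have dd: "dsel (pow_op I0 f x) = dsel x" unfolding dsel_def pp ..
  have xi: "pow_op I0 f x i0 = f (x i0)" unfolding pow_op_def using i0 by simp
  show ?thesis
  proof (cases "\<exists>D. isclass D \<and> pat x = P D")
    case True
    have d: "isclass (dsel x)" using dsel[OF True] by auto
    have h: "mhom (T (dsel x) i0) f (dsel x) f (inv_into (dsel x) (sg (dsel x) i0))"
      using mhom_inv sg[OF d] class_cl[OF d] by blast
    have "inv_into (dsel x) (sg (dsel x) i0) (f (x i0)) = f (inv_into (dsel x) (sg (dsel x) i0) (x i0))"
      using h prj_case[OF x True] unfolding mhom_def by blast
    then show ?thesis unfolding prj_def pp dd xi using True by simp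
  next
    case False
    show ?thesis unfolding prj_def pp dd xi if_not_P[OF False] by (rule refl)
  qed
qed

lemma prj_emb: "a \<in> A \<Longrightarrow> prj (emb a) = a"
proof -
  assume a: "a \<in> A"
  have c: "isclass (cls a)" by (rule class_cls[OF a])
  have ex: "\<exists>D. isclass D \<and> pat (emb a) = P D" using pat_emb[OF a] c by blast
  have d: "isclass (dsel (emb a))" "P (cls a) = P (dsel (emb a))" using dsel[OF ex] pat_emb[OF a] by auto
  have dd: "dsel (emb a) = cls a" using P_inj[OF d(1) c] d(2) by simp
  have ei: "emb a i0 = sg (cls a) i0 a" unfolding emb_def using i0 by simp
  have inj: "inj_on (sg (cls a) i0) (cls a)" using sg[OF c] by (simp add: bij_betw_def)
  show ?thesis unfolding prj_def dd ei using ex inj cls_mem[OF a] by (simp add: inv_into_f_f dd)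
qed

lemma A_in_VB: "in_V Bs f A f"
  by (rule in_V_intro[where I = I0 and e = emb and p = prj])
     (use emb1 emb2 prj1 prj2 prj_emb ne cl in auto)

end

theorem lemma5p1:
  fixes A :: "'a set" and f :: "'a \<Rightarrow> 'a"
  assumes "monounary A f"
  shows "\<exists>(B :: 'a set) g. monounary B g \<and> in_R A f B g \<and> starstar B g \<and> same_V A f B g"
proof -
  interpret mu A f using assms unfolding monounary_def by unfold_locales auto
  show ?thesis
  proof (intro exI conjI)
    show "monounary Bs f" unfolding monounary_def using Bs_ne Bs_cl by blast
    show "in_R A f Bs f" unfolding in_R_def using retract_Bs miso_refl by blast
    show "starstar Bs f" by (rule starstar_Bs)
    show "same_V A f Bs f" unfolding same_V_def using A_in_VB B_in_VA by blast
  qed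
qed

end
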